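(* Let $\Lambda=[\lambda_{\min},\lambda_{\max}]\subset[0,\infty)$, $\beta\ge0$, let $\tilde\nu(\lambda,dx)$ be a probability kernel on $(0,\infty)$ with $s_0>0$ such that $\sup_{\lambda\in\Lambda}\int_0^\infty e^{sx}\tilde\nu(\lambda,dx)<\infty$ for $s\in[0,s_0)$, and let $\eta\in\mathbb C$ with $\Re(\eta)=\delta<s_0$. Let $F\in C^2(\Lambda)$ and let $\Pi_{\Delta\lambda}F$ be its PCHIP interpolant (interpolation order $p=2$) or piecewise-linear interpolant ($p=1$) on a grid of maximal step $h$. With $N_{\exp}[F](\lambda)=\lambda\int_0^\infty(e^{\eta x}F(\lambda+\beta x)-F(\lambda))\tilde\nu(\lambda,dx)$ (clamped extension outside $\Lambda$), $$\|N_{\exp}[\Pi_{\Delta\lambda}F]-N_{\exp}[F]\|_{\infty,\Lambda}\le\lambda_{\max}\big(C^*_\delta(\Lambda)+1\big)\|\Pi_{\Delta\lambda}F-F\|_{\infty,\Lambda}=\mathcal O(h^p),$$ uniformly on $\Lambda$, where $C^*_\delta(\Lambda)=\sup_{\lambda\in\Lambda}\int_0^\infty e^{\delta x}\tilde\nu(\lambda,dx)<\infty$.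
   Context: Clamped extension: a function on $\Lambda$ is extended to $[0,\infty)$ by the value at the nearest endpoint of $\Lambda$. PCHIP is the piecewise cubic Hermite interpolant with Fritsch–Carlson slopes (interior slope $m_j=\frac{w_1+w_2}{w_1/d_{j-1}+w_2/d_j}$, $w_1=2h_j+h_{j-1}$, $w_2=h_j+2h_{j-1}$, when consecutive secant slopes $d_{j-1},d_j$ satisfy $d_{j-1}d_j>0$, and $m_j=0$ otherwise). *)

theory Defs
  imports "HOL-Analysis.Analysis" "HOL-Probability.Probability"
begin

definition C2_on :: "real set \<Rightarrow> (real \<Rightarrow> real) \<Rightarrow> bool" where
  "C2_on S F \<longleftrightarrow> (\<exists>F' F''. (\<forall>x\<in>S. (F has_real_derivative F' x) (at x within S)
       \<and> (F' has_real_derivative F'' x) (at x within S)) \<and> continuous_on S F'')"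

definition clamp_ext :: "real \<Rightarrow> real \<Rightarrow> (real \<Rightarrow> real) \<Rightarrow> real \<Rightarrow> real" where
  "clamp_ext a b F x = F (max a (min b x))"

definition Nexp :: "real \<Rightarrow> real \<Rightarrow> real \<Rightarrow> complex \<Rightarrow> (real \<Rightarrow> real measure)
                    \<Rightarrow> (real \<Rightarrow> real) \<Rightarrow> real \<Rightarrow> complex" where
  "Nexp a b \<beta> \<eta> \<nu> F l = complex_of_real l *
     (LINT x|\<nu> l. exp (\<eta> * complex_of_real x) * complex_of_real (clamp_ext a b F (l + \<beta> * x))
                 - complex_of_real (clamp_ext a b F l))"

definition expmom :: "real set \<Rightarrow> (real \<Rightarrow> real measure) \<Rightarrow> real \<Rightarrow> ennreal" where
  "expmom L \<nu> s = (SUP l\<in>L. \<integral>\<^sup>+ x. ennreal (exp (s * x)) \<partial>\<nu> l)"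

definition Cstar :: "real set \<Rightarrow> (real \<Rightarrow> real measure) \<Rightarrow> real \<Rightarrow> real" where
  "Cstar L \<nu> \<delta> = enn2real (expmom L \<nu> \<delta>)"

definition supnorm_on :: "real set \<Rightarrow> (real \<Rightarrow> real) \<Rightarrow> real" where
  "supnorm_on S G = (SUP x\<in>S. \<bar>G x\<bar>)"

definition is_grid :: "real \<Rightarrow> real \<Rightarrow> nat \<Rightarrow> (nat \<Rightarrow> real) \<Rightarrow> bool" where
  "is_grid a b n xs \<longleftrightarrow> n \<ge> 1 \<and> xs 0 = a \<and> xs n = b \<and> (\<forall>j<n. xs j < xs (Suc j))"

definition step :: "(nat \<Rightarrow> real) \<Rightarrow> nat \<Rightarrow> real" where
  "step xs j = xs (Suc j) - xs j"

definition maxstep :: "nat \<Rightarrow> (nat \<Rightarrow> real) \<Rightarrow> real" where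
  "maxstep n xs = Max (step xs ` {..<n})"

definition cell :: "nat \<Rightarrow> (nat \<Rightarrow> real) \<Rightarrow> real \<Rightarrow> nat" where
  "cell n xs x = (GREATEST j. j < n \<and> xs j \<le> x)"

definition secant :: "(nat \<Rightarrow> real) \<Rightarrow> (real \<Rightarrow> real) \<Rightarrow> nat \<Rightarrow> real" where
  "secant xs F j = (F (xs (Suc j)) - F (xs j)) / step xs j"

definition pl_interp :: "nat \<Rightarrow> (nat \<Rightarrow> real) \<Rightarrow> (real \<Rightarrow> real) \<Rightarrow> real \<Rightarrow> real" where
  "pl_interp n xs F x = (let j = cell n xs x in F (xs j) + (x - xs j) * secant xs F j)"

text \<open>Endpoint slope (shape-preserving three-point formula, as in SciPy's PchipInterpolator).\<close>
definition pchip_edge :: "real \<Rightarrow> real \<Rightarrow> real \<Rightarrow> real \<Rightarrow> real" where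
  "pchip_edge h0 h1 d0 d1 =
     (let m = ((2 * h0 + h1) * d0 - h0 * d1) / (h0 + h1) in
      if sgn m \<noteq> sgn d0 then 0
      else if sgn d0 \<noteq> sgn d1 \<and> \<bar>m\<bar> > 3 * \<bar>d0\<bar> then 3 * d0
      else m)"

text \<open>Fritsch--Carlson (Fritsch--Butland weighted harmonic mean) PCHIP slopes.\<close>
definition pchip_slope :: "nat \<Rightarrow> (nat \<Rightarrow> real) \<Rightarrow> (real \<Rightarrow> real) \<Rightarrow> nat \<Rightarrow> real" where
  "pchip_slope n xs F j =
     (let d = secant xs F; hh = step xs in
      if n = 1 then d 0
      else if j = 0 then pchip_edge (hh 0) (hh 1) (d 0) (d 1)
      else if j = n then pchip_edge (hh (n - 1)) (hh (n - 2)) (d (n - 1)) (d (n - 2))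
      else if d (j - 1) * d j > 0 then
        (let w1 = 2 * hh j + hh (j - 1); w2 = hh j + 2 * hh (j - 1) in
         (w1 + w2) / (w1 / d (j - 1) + w2 / d j))
      else 0)"

definition pchip_interp :: "nat \<Rightarrow> (nat \<Rightarrow> real) \<Rightarrow> (real \<Rightarrow> real) \<Rightarrow> real \<Rightarrow> real" where
  "pchip_interp n xs F x =
     (let j = cell n xs x; hj = step xs j; t = (x - xs j) / hj;
          m0 = pchip_slope n xs F j; m1 = pchip_slope n xs F (Suc j) in
      F (xs j) * (2 * t^3 - 3 * t^2 + 1) + hj * m0 * (t^3 - 2 * t^2 + t)
      + F (xs (Suc j)) * (- 2 * t^3 + 3 * t^2) + hj * m1 * (t^3 - t^2))"

definition interp :: "nat \<Rightarrow> nat \<Rightarrow> (nat \<Rightarrow> real) \<Rightarrow> (real \<Rightarrow> real) \<Rightarrow> real \<Rightarrow> real" where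
  "interp p n xs F = (if p = 1 then pl_interp n xs F else pchip_interp n xs F)"

end

theory Submission
  imports Defs
begin


lemma lip_bound:
  fixes f f' :: "real \<Rightarrow> real"
  assumes "\<And>x. x\<in>{a..b} \<Longrightarrow> (f has_real_derivative f' x) (at x within {a..b})"
    and "\<And>x. x\<in>{a..b} \<Longrightarrow> \<bar>f' x\<bar> \<le> B" and "x \<in> {a..b}" "y \<in> {a..b}"
  shows "\<bar>f x - f y\<bar> \<le> B * \<bar>x - y\<bar>"
  using field_differentiable_bound[of "{a..b}" f f' B x y] assms by auto

locale interp_setting =
  fixes a b :: real and F F' F'' :: "real \<Rightarrow> real" and M1 M2 :: real
  assumes ab: "a < b"
    and dF: "\<And>x. x\<in>{a..b} \<Longrightarrow> (F has_real_derivative F' x) (at x within {a..b})"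
    and dF': "\<And>x. x\<in>{a..b} \<Longrightarrow> (F' has_real_derivative F'' x) (at x within {a..b})"
    and M1: "\<And>x. x\<in>{a..b} \<Longrightarrow> \<bar>F' x\<bar> \<le> M1"
    and M2: "\<And>x. x\<in>{a..b} \<Longrightarrow> \<bar>F'' x\<bar> \<le> M2"
    and M1pos: "0 \<le> M1" and M2pos: "0 \<le> M2"
begin

lemma lipF: "x \<in> {a..b} \<Longrightarrow> y \<in> {a..b} \<Longrightarrow> \<bar>F x - F y\<bar> \<le> M1 * \<bar>x - y\<bar>"
  using lip_bound[of a b F F' M1 x y] dF M1 by auto

lemma lipF': "x \<in> {a..b} \<Longrightarrow> y \<in> {a..b} \<Longrightarrow> \<bar>F' x - F' y\<bar> \<le> M2 * \<bar>x - y\<bar>"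
  using lip_bound[of a b F' F'' M2 x y] dF' M2 by auto

lemma taylor:
  assumes x: "x \<in> {a..b}" and y: "y \<in> {a..b}"
  shows "\<bar>F y - F x - (y - x) * F' x\<bar> \<le> M2 * (y - x)^2"
proof -
  define S where "S = {min x y..max x y}"
  have Ssub: "S \<subseteq> {a..b}" using x y by (auto simp: S_def)
  define g where "g z = F z - z * F' x" for z
  have dg: "(g has_real_derivative (F' z - F' x)) (at z within S)" if "z \<in> S" for z
  proof -
    have "(F has_real_derivative F' z) (at z within S)"
      using DERIV_subset[OF dF Ssub] that Ssub by auto
    then show ?thesis unfolding g_def
      by (auto intro!: derivative_eq_intros)
  qed
  have bd: "\<bar>F' z - F' x\<bar> \<le> M2 * \<bar>y - x\<bar>" if "z \<in> S" for z
  proof -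
    have "\<bar>F' z - F' x\<bar> \<le> M2 * \<bar>z - x\<bar>" using lipF' that Ssub x by auto
    also have "\<dots> \<le> M2 * \<bar>y - x\<bar>" using that M2pos
      by (intro mult_left_mono) (auto simp: S_def)
    finally show ?thesis .
  qed
  have "\<bar>g y - g x\<bar> \<le> M2 * \<bar>y - x\<bar> * \<bar>y - x\<bar>"
    using field_differentiable_bound[of S g "\<lambda>z. F' z - F' x" "M2 * \<bar>y - x\<bar>" y x] dg bd
    by (auto simp: S_def)
  moreover have "g y - g x = F y - F x - (y - x) * F' x" by (simp add: g_def algebra_simps)
  ultimately show ?thesis by (simp add: power2_eq_square abs_mult_self_eq mult.assoc)
qed

end

lemma grid_mono:
  assumes "is_grid a b n xs" "j \<le> k" "k \<le> n" shows "xs j \<le> xs k"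
  using assms(2,3)
proof (induction k)
  case 0 then show ?case by simp
next
  case (Suc k)
  show ?case
  proof (cases "j = Suc k")
    case False
    then have "xs j \<le> xs k" using Suc by auto
    moreover have "xs k < xs (Suc k)" using assms(1) Suc.prems unfolding is_grid_def by auto
    ultimately show ?thesis by simp
  qed simp
qed

lemma grid_range:
  assumes "is_grid a b n xs" "j \<le> n" shows "a \<le> xs j" "xs j \<le> b"
  using grid_mono[OF assms(1), of 0 j] grid_mono[OF assms(1), of j n] assms
  unfolding is_grid_def by auto

lemma step_pos: "is_grid a b n xs \<Longrightarrow> j < n \<Longrightarrow> 0 < step xs j"
  unfolding is_grid_def step_def by auto

lemma step_le: "is_grid a b n xs \<Longrightarrow> j < n \<Longrightarrow> step xs j \<le> maxstep n xs"
  unfolding maxstep_def by (intro Max_ge) auto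

lemma maxstep_pos: "is_grid a b n xs \<Longrightarrow> 0 < maxstep n xs"
  using step_pos[of a b n xs 0] step_le[of a b n xs 0] unfolding is_grid_def by auto

lemma cell_props:
  assumes g: "is_grid a b n xs" and x: "a \<le> x"
  shows "cell n xs x < n" "xs (cell n xs x) \<le> x"
    "Suc (cell n xs x) = n \<or> x < xs (Suc (cell n xs x))"
proof -
  let ?P = "\<lambda>j. j < n \<and> xs j \<le> x"
  have P0: "?P 0" using g x unfolding is_grid_def by auto
  have bnd: "\<And>y. ?P y \<Longrightarrow> y \<le> n" by auto
  have Pc: "?P (cell n xs x)" unfolding cell_def by (rule GreatestI_nat[of ?P 0 n, OF P0 bnd])
  then show "cell n xs x < n" "xs (cell n xs x) \<le> x" by auto
  show "Suc (cell n xs x) = n \<or> x < xs (Suc (cell n xs x))"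
  proof (rule ccontr)
    assume "\<not> ?thesis"
    then have "?P (Suc (cell n xs x))" using Pc by auto
    then have "Suc (cell n xs x) \<le> cell n xs x" unfolding cell_def
      using Greatest_le_nat[of ?P _ n] bnd by blast
    then show False by simp
  qed
qed

lemma cell_in:
  assumes g: "is_grid a b n xs" and x: "x \<in> {a..b}"
  shows "cell n xs x < n" "xs (cell n xs x) \<le> x" "x \<le> xs (Suc (cell n xs x))"
  using cell_props[OF g, of x] x g unfolding is_grid_def by auto

lemma cell_eq_iff:
  assumes g: "is_grid a b n xs" and x: "a \<le> x"
  shows "cell n xs x = c \<longleftrightarrow> c < n \<and> xs c \<le> x \<and> (Suc c = n \<or> x < xs (Suc c))"
proof
  assume "cell n xs x = c" then show "c < n \<and> xs c \<le> x \<and> (Suc c = n \<or> x < xs (Suc c))"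
    using cell_props[OF g x] by auto
next
  assume c: "c < n \<and> xs c \<le> x \<and> (Suc c = n \<or> x < xs (Suc c))"
  have "(GREATEST j. j < n \<and> xs j \<le> x) = c"
  proof (rule Greatest_equality)
    show "c < n \<and> xs c \<le> x" using c by auto
    fix y assume y: "y < n \<and> xs y \<le> x"
    show "y \<le> c"
    proof (rule ccontr)
      assume "\<not> y \<le> c"
      then have "Suc c \<le> y" by simp
      then have "xs (Suc c) \<le> xs y" using grid_mono[OF g, of "Suc c" y] y by auto
      then show False using c y \<open>Suc c \<le> y\<close> by auto
    qed
  qed
  then show "cell n xs x = c" unfolding cell_def .
qed

lemma cell_below:
  assumes g: "is_grid a b n xs" and x: "x < a"
  shows "cell n xs x = (GREATEST j::nat. False)"
proof -
  have "(\<lambda>j. j < n \<and> xs j \<le> x) = (\<lambda>j. False)"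
    using grid_range[OF g] x by (auto simp: fun_eq_iff) (meson less_imp_le_nat not_le order_trans)
  then show ?thesis unfolding cell_def by simp
qed

lemma cell_measurable:
  assumes g: "is_grid a b n xs"
  shows "cell n xs \<in> borel \<rightarrow>\<^sub>M count_space UNIV"
proof (subst measurable_count_space_eq2_countable, safe)
  fix c :: nat
  have "cell n xs -` {c} = {x. x < a \<and> (GREATEST j::nat. False) = c} \<union>
      {x. a \<le> x \<and> c < n \<and> xs c \<le> x \<and> (Suc c = n \<or> x < xs (Suc c))}"
    using cell_eq_iff[OF g] cell_below[OF g] by (auto simp: not_le) (metis not_le)+
  also have "\<dots> \<in> sets borel" by measurable
  finally show "cell n xs -` {c} \<inter> space borel \<in> sets borel" by simp
qed auto



lemma sgn_diff_bound: "sgn (m::real) \<noteq> sgn d \<Longrightarrow> \<bar>d\<bar> \<le> \<bar>m - d\<bar>"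
  by (auto simp: sgn_if split: if_splits)

lemma edge_bound:
  assumes h: "0 < h0" "0 < h1" and e0: "\<bar>d0 - g\<bar> \<le> E" and e1: "\<bar>d1 - g\<bar> \<le> E"
  shows "\<bar>pchip_edge h0 h1 d0 d1 - g\<bar> \<le> 5 * E"
proof -
  define m where "m = ((2 * h0 + h1) * d0 - h0 * d1) / (h0 + h1)"
  have "m - d0 = (h0 / (h0 + h1)) * (d0 - d1)" using h by (simp add: m_def field_simps)
  moreover have "h0 / (h0 + h1) \<le> 1" "0 \<le> h0 / (h0 + h1)" using h by auto
  ultimately have md: "\<bar>m - d0\<bar> \<le> \<bar>d0 - d1\<bar>"
    by (metis abs_ge_zero abs_mult abs_of_nonneg mult_left_le_one_le)
  have "\<bar>d0 - d1\<bar> \<le> 2 * E" using e0 e1 by linarith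
  note md = md this
  show ?thesis
  proof (cases "sgn m \<noteq> sgn d0")
    case True
    then have r: "pchip_edge h0 h1 d0 d1 = 0" unfolding pchip_edge_def m_def[symmetric] by simp
    have "\<bar>d0\<bar> \<le> \<bar>m - d0\<bar>" using sgn_diff_bound[OF True] .
    then show ?thesis using r md e0 by linarith
  next
    case False
    show ?thesis
    proof (cases "sgn d0 \<noteq> sgn d1 \<and> \<bar>m\<bar> > 3 * \<bar>d0\<bar>")
      case True
      then have r: "pchip_edge h0 h1 d0 d1 = 3 * d0" using False
        unfolding pchip_edge_def m_def[symmetric] by simp
      have "\<bar>m\<bar> \<le> \<bar>m - d0\<bar> + \<bar>d0\<bar>" by linarith
      then have "2 * \<bar>d0\<bar> \<le> 2 * E" using True md by linarith
      then show ?thesis using r e0 by linarith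
    next
      case c2: False
      then have r: "pchip_edge h0 h1 d0 d1 = m" using False
        unfolding pchip_edge_def m_def[symmetric] by auto
      then show ?thesis using md e0 by linarith
    qed
  qed
qed

lemma harm_bound:
  fixes d1 d2 w1 w2 :: real
  assumes w: "0 < w1" "0 < w2" and d: "d1 * d2 > 0"
    and e1: "\<bar>d1 - g\<bar> \<le> E" and e2: "\<bar>d2 - g\<bar> \<le> E"
  shows "\<bar>(w1 + w2) / (w1 / d1 + w2 / d2) - g\<bar> \<le> E"
proof -
  have d1: "d1 \<noteq> 0" and d2: "d2 \<noteq> 0" using d by auto
  have eq: "(w1 + w2) / (w1 / d1 + w2 / d2) = (w1 + w2) * d1 * d2 / (w1 * d2 + w2 * d1)"
    using d1 d2 by (simp add: field_simps)
  have "min d1 d2 \<le> (w1 + w2) / (w1 / d1 + w2 / d2) \<and> (w1 + w2) / (w1 / d1 + w2 / d2) \<le> max d1 d2"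
  proof (cases "d1 > 0")
    case True
    then have "d2 > 0" using d by (metis zero_less_mult_pos)
    then have den: "w1 * d2 + w2 * d1 > 0" using True w by (simp add: add_pos_pos)
    have lo: "min d1 d2 * (w1 * d2 + w2 * d1) \<le> (w1 + w2) * d1 * d2"
    proof -
      have "min d1 d2 * (w1 * d2) \<le> w1 * d1 * d2" using w \<open>d2>0\<close>
        by (simp add: mult_right_mono mult.commute mult.left_commute)
      moreover have "min d1 d2 * (w2 * d1) \<le> w2 * d1 * d2" using w True
        by (simp add: mult_right_mono mult.commute mult.left_commute)
      ultimately show ?thesis by (simp add: algebra_simps)
    qed
    have hi: "(w1 + w2) * d1 * d2 \<le> max d1 d2 * (w1 * d2 + w2 * d1)"
    proof -
      have "w1 * d1 * d2 \<le> max d1 d2 * (w1 * d2)" using w \<open>d2>0\<close>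
        by (simp add: mult_right_mono mult.commute mult.left_commute)
      moreover have "w2 * d1 * d2 \<le> max d1 d2 * (w2 * d1)" using w True
        by (simp add: mult_right_mono mult.commute mult.left_commute)
      ultimately show ?thesis by (simp add: algebra_simps)
    qed
    show ?thesis unfolding eq using lo hi den by (simp add: field_simps)
  next
    case False
    then have n1: "d1 < 0" using d1 by simp
    then have n2: "d2 < 0" using d by (metis mult_neg_pos not_less_iff_gr_or_eq zero_less_mult_iff)
    then have den: "w1 * d2 + w2 * d1 < 0" using n1 w
      by (simp add: add_neg_neg mult_pos_neg)
    have lo: "min d1 d2 * (w1 * d2 + w2 * d1) \<ge> (w1 + w2) * d1 * d2"
    proof -
      have "min d1 d2 * (w1 * d2) \<ge> w1 * d1 * d2" using w n2
        by (simp add: mult_right_mono_neg mult.commute mult.left_commute)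
      moreover have "min d1 d2 * (w2 * d1) \<ge> w2 * d1 * d2" using w n1
        by (simp add: mult_right_mono_neg mult.commute mult.left_commute)
      ultimately show ?thesis by (simp add: algebra_simps)
    qed
    have hi: "(w1 + w2) * d1 * d2 \<ge> max d1 d2 * (w1 * d2 + w2 * d1)"
    proof -
      have "w1 * d1 * d2 \<ge> max d1 d2 * (w1 * d2)" using w n2
        by (simp add: mult_right_mono_neg mult.commute mult.left_commute)
      moreover have "w2 * d1 * d2 \<ge> max d1 d2 * (w2 * d1)" using w n1
        by (simp add: mult_right_mono_neg mult.commute mult.left_commute)
      ultimately show ?thesis by (simp add: algebra_simps)
    qed
    show ?thesis unfolding eq using lo hi den by (simp add: field_simps)
  qed
  then show ?thesis using e1 e2 by (auto simp: abs_le_iff min_def max_def split: if_splits)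
qed

lemma opp_sign_bound:
  fixes d1 d2 :: real
  assumes d: "\<not> d1 * d2 > 0" and e1: "\<bar>d1 - g\<bar> \<le> E" and e2: "\<bar>d2 - g\<bar> \<le> E"
  shows "\<bar>0 - g\<bar> \<le> E"
proof -
  have "(d1 \<le> 0 \<and> 0 \<le> d2) \<or> (d2 \<le> 0 \<and> 0 \<le> d1)"
    using d mult_pos_pos[of d1 d2] mult_neg_neg[of d1 d2] by linarith
  then show ?thesis using e1 e2 by auto
qed



lemma hermite_alg:
  fixes t hj H A B F0 F1 Fx g m0 m1 :: real
  assumes t: "0 \<le> t" "t \<le> 1" and hj: "0 \<le> hj" "hj \<le> H" and AB: "0 \<le> A" "0 \<le> B"
    and e0: "\<bar>m0 - g\<bar> \<le> A * H" and e1: "\<bar>m1 - g\<bar> \<le> A * H"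
    and r1: "\<bar>F1 - F0 - hj * g\<bar> \<le> B * H^2" and r2: "\<bar>Fx - F0 - t * hj * g\<bar> \<le> B * H^2"
  shows "\<bar>F0 * (2 * t^3 - 3 * t^2 + 1) + hj * m0 * (t^3 - 2 * t^2 + t)
      + F1 * (- 2 * t^3 + 3 * t^2) + hj * m1 * (t^3 - t^2) - Fx\<bar> \<le> (2 * A + 2 * B) * H^2"
proof -
  define H10 where "H10 = t * ((1 - t) * (1 - t))"
  define H01 where "H01 = t^2 * (3 - 2 * t)"
  define H11 where "H11 = t * t * (1 - t)"
  have eq: "F0 * (2 * t^3 - 3 * t^2 + 1) + hj * m0 * (t^3 - 2 * t^2 + t)
      + F1 * (- 2 * t^3 + 3 * t^2) + hj * m1 * (t^3 - t^2) - Fx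
      = hj * (m0 - g) * H10 + (F1 - F0 - hj * g) * H01 - hj * (m1 - g) * H11 - (Fx - F0 - t * hj * g)"
    unfolding H10_def H01_def H11_def by (simp add: algebra_simps power2_eq_square power3_eq_cube)
  have b10: "\<bar>H10\<bar> \<le> 1" unfolding H10_def using t
    by (simp add: abs_mult mult_le_one)
  have b11: "\<bar>H11\<bar> \<le> 1" unfolding H11_def using t
    by (simp add: abs_mult mult_le_one)
  have "0 \<le> (1 - t)^2 * (1 + 2 * t)" using t by simp
  moreover have "H01 = 1 - (1 - t)^2 * (1 + 2 * t)" unfolding H01_def
    by (simp add: algebra_simps power2_eq_square)
  moreover have "0 \<le> H01" unfolding H01_def using t by simp
  ultimately have b01: "\<bar>H01\<bar> \<le> 1" by linarith
  have "\<bar>hj * (m0 - g) * H10\<bar> \<le> H * (A * H) * 1"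
    unfolding abs_mult using hj b10 e0 AB
    by (intro mult_mono) (auto intro: order_trans[OF _ hj(2)])
  moreover have "\<bar>hj * (m1 - g) * H11\<bar> \<le> H * (A * H) * 1"
    unfolding abs_mult using hj b11 e1 AB
    by (intro mult_mono) (auto intro: order_trans[OF _ hj(2)])
  moreover have "\<bar>(F1 - F0 - hj * g) * H01\<bar> \<le> (B * H^2) * 1"
    unfolding abs_mult using b01 r1 AB by (intro mult_mono) auto
  ultimately show ?thesis unfolding eq using r2
    by (simp add: power2_eq_square algebra_simps)
qed

context interp_setting begin

lemma secant_bounds:
  assumes g: "is_grid a b n xs" and j: "j < n"
  shows "\<bar>secant xs F j - F' (xs j)\<bar> \<le> M2 * maxstep n xs"
    "\<bar>secant xs F j - F' (xs (Suc j))\<bar> \<le> M2 * maxstep n xs"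
    "\<bar>secant xs F j\<bar> \<le> M1"
proof -
  define h where "h = step xs j"
  have h: "0 < h" "h \<le> maxstep n xs" using step_pos[OF g j] step_le[OF g j] by (auto simp: h_def)
  have x0: "xs j \<in> {a..b}" and x1: "xs (Suc j) \<in> {a..b}" using grid_range[OF g] j by auto
  have hh: "xs (Suc j) - xs j = h" by (simp add: h_def step_def)
  have hh': "xs j - xs (Suc j) = - h" by (simp add: h_def step_def)
  have s: "secant xs F j = (F (xs (Suc j)) - F (xs j)) / h" by (simp add: secant_def h_def)
  have "M2 * h * h \<le> M2 * maxstep n xs * h" using h M2pos by (simp add: mult_right_mono mult_left_mono)
  note hm = this
  have T1: "\<bar>F (xs (Suc j)) - F (xs j) - h * F' (xs j)\<bar> \<le> M2 * h * h"
    using taylor[OF x0 x1] hh by (simp add: power2_eq_square mult.assoc)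
  have "secant xs F j - F' (xs j) = (F (xs (Suc j)) - F (xs j) - h * F' (xs j)) / h"
    using h by (simp add: s field_simps)
  then have "\<bar>secant xs F j - F' (xs j)\<bar> = \<bar>F (xs (Suc j)) - F (xs j) - h * F' (xs j)\<bar> / h"
    using h by simp
  also have "\<dots> \<le> M2 * maxstep n xs" using T1 hm h by (simp add: divide_le_eq)
  finally show "\<bar>secant xs F j - F' (xs j)\<bar> \<le> M2 * maxstep n xs" .
  have T2: "\<bar>F (xs j) - F (xs (Suc j)) - (- h) * F' (xs (Suc j))\<bar> \<le> M2 * h * h"
    using taylor[OF x1 x0] unfolding hh' by (simp add: power2_eq_square mult.assoc)
  have "secant xs F j - F' (xs (Suc j)) = - (F (xs j) - F (xs (Suc j)) - (- h) * F' (xs (Suc j))) / h"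
    using h by (simp add: s field_simps)
  then have "\<bar>secant xs F j - F' (xs (Suc j))\<bar> = \<bar>F (xs j) - F (xs (Suc j)) - (- h) * F' (xs (Suc j))\<bar> / h"
    using h by simp
  also have "\<dots> \<le> M2 * maxstep n xs" using T2 hm h by (simp add: divide_le_eq)
  finally show "\<bar>secant xs F j - F' (xs (Suc j))\<bar> \<le> M2 * maxstep n xs" .
  have "\<bar>F (xs (Suc j)) - F (xs j)\<bar> \<le> M1 * h" using lipF[OF x1 x0] hh h by simp
  then show "\<bar>secant xs F j\<bar> \<le> M1" using h by (simp add: s divide_le_eq)
qed

lemma F'_step:
  assumes g: "is_grid a b n xs" and j: "j < n"
  shows "\<bar>F' (xs (Suc j)) - F' (xs j)\<bar> \<le> M2 * maxstep n xs"
proof -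
  have x0: "xs j \<in> {a..b}" and x1: "xs (Suc j) \<in> {a..b}" using grid_range[OF g] j by auto
  have "\<bar>F' (xs (Suc j)) - F' (xs j)\<bar> \<le> M2 * \<bar>xs (Suc j) - xs j\<bar>" using lipF'[OF x1 x0] .
  also have "\<bar>xs (Suc j) - xs j\<bar> = step xs j" using step_pos[OF g j] by (simp add: step_def)
  also have "M2 * step xs j \<le> M2 * maxstep n xs" using step_le[OF g j] M2pos by (simp add: mult_left_mono)
  finally show ?thesis .
qed

lemma slope_bound:
  assumes g: "is_grid a b n xs" and j: "j \<le> n"
  shows "\<bar>pchip_slope n xs F j - F' (xs j)\<bar> \<le> 10 * M2 * maxstep n xs"
proof -
  let ?H = "maxstep n xs"
  let ?d = "secant xs F"
  have n1: "1 \<le> n" using g by (simp add: is_grid_def)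
  have E0: "0 \<le> M2 * ?H" using maxstep_pos[OF g] M2pos by simp
  show ?thesis
  proof (cases "n = 1")
    case True
    then have r: "pchip_slope n xs F j = ?d 0" by (simp add: pchip_slope_def)
    have "j = 0 \<or> j = Suc 0" using j True by auto
    then have "\<bar>?d 0 - F' (xs j)\<bar> \<le> M2 * ?H" using secant_bounds[OF g, of 0] True by auto
    then show ?thesis using r E0 by linarith
  next
    case n: False
    then have n2: "2 \<le> n" using n1 by simp
    show ?thesis
    proof (cases "j = 0")
      case True
      then have r: "pchip_slope n xs F j = pchip_edge (step xs 0) (step xs 1) (?d 0) (?d 1)"
        using n by (simp add: pchip_slope_def Let_def)
      have a1: "\<bar>?d 0 - F' (xs 0)\<bar> \<le> 2 * (M2 * ?H)" using secant_bounds(1)[OF g, of 0] n2 E0 by simp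
      have "\<bar>?d 1 - F' (xs 1)\<bar> \<le> M2 * ?H" using secant_bounds(1)[OF g, of 1] n2 by simp
      moreover have "\<bar>F' (xs (Suc 0)) - F' (xs 0)\<bar> \<le> M2 * ?H" using F'_step[OF g, of 0] n2 by simp
      ultimately have a2: "\<bar>?d 1 - F' (xs 0)\<bar> \<le> 2 * (M2 * ?H)" by simp
      have "\<bar>pchip_edge (step xs 0) (step xs 1) (?d 0) (?d 1) - F' (xs 0)\<bar> \<le> 5 * (2 * (M2 * ?H))"
        by (rule edge_bound[OF step_pos[OF g] step_pos[OF g] a1 a2]) (use n2 in auto)
      then show ?thesis using r True by simp
    next
      case j0: False
      show ?thesis
      proof (cases "j = n")
        case True
        then have r: "pchip_slope n xs F j = pchip_edge (step xs (n - 1)) (step xs (n - 2)) (?d (n - 1)) (?d (n - 2))"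
          using n j0 by (simp add: pchip_slope_def Let_def)
        have sn: "Suc (n - 1) = n" "Suc (n - 2) = n - 1" using n2 by auto
        have a1: "\<bar>?d (n - 1) - F' (xs n)\<bar> \<le> 2 * (M2 * ?H)"
          using secant_bounds(2)[OF g, of "n - 1"] n2 E0 sn by simp
        have "\<bar>?d (n - 2) - F' (xs (n - 1))\<bar> \<le> M2 * ?H"
          using secant_bounds(2)[OF g, of "n - 2"] n2 sn by simp
        moreover have "\<bar>F' (xs n) - F' (xs (n - 1))\<bar> \<le> M2 * ?H" using F'_step[OF g, of "n - 1"] n2 sn by simp
        ultimately have a2: "\<bar>?d (n - 2) - F' (xs n)\<bar> \<le> 2 * (M2 * ?H)" by simp
        have "\<bar>pchip_edge (step xs (n - 1)) (step xs (n - 2)) (?d (n - 1)) (?d (n - 2)) - F' (xs n)\<bar> \<le> 5 * (2 * (M2 * ?H))"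
          by (rule edge_bound[OF step_pos[OF g] step_pos[OF g] a1 a2]) (use n2 in auto)
        then show ?thesis using r True by simp
      next
        case jn: False
        then have jlt: "j < n" using j by simp
        have sj: "Suc (j - 1) = j" using j0 by simp
        have b1: "\<bar>?d (j - 1) - F' (xs j)\<bar> \<le> M2 * ?H"
          using secant_bounds(2)[OF g, of "j - 1"] jlt sj by simp
        have b2: "\<bar>?d j - F' (xs j)\<bar> \<le> M2 * ?H"
          using secant_bounds(1)[OF g jlt] by simp
        have "\<bar>pchip_slope n xs F j - F' (xs j)\<bar> \<le> M2 * ?H"
        proof (cases "?d (j - 1) * ?d j > 0")
          case True
          have w: "0 < 2 * step xs j + step xs (j - 1)" "0 < step xs j + 2 * step xs (j - 1)"
          proof -
            have "0 < step xs (j - 1)" using step_pos[OF g, of "j - 1"] jlt by simp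
            then show "0 < 2 * step xs j + step xs (j - 1)" "0 < step xs j + 2 * step xs (j - 1)"
              using step_pos[OF g jlt] by simp_all
          qed
          have r: "pchip_slope n xs F j = (let w1 = 2 * step xs j + step xs (j - 1); w2 = step xs j + 2 * step xs (j - 1) in
               (w1 + w2) / (w1 / ?d (j - 1) + w2 / ?d j))"
            using n j0 jn True by (simp add: pchip_slope_def Let_def)
          show ?thesis unfolding r Let_def by (rule harm_bound[OF w True b1 b2])
        next
          case False
          have r: "pchip_slope n xs F j = 0"
            using n j0 jn False by (simp add: pchip_slope_def Let_def)
          show ?thesis unfolding r by (rule opp_sign_bound[OF False b1 b2])
        qed
        then show ?thesis using E0 by linarith
      qed
    qed
  qed
qed

lemma pl_err:
  assumes g: "is_grid a b n xs" and x: "x \<in> {a..b}"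
  shows "\<bar>pl_interp n xs F x - F x\<bar> \<le> 2 * M1 * maxstep n xs"
proof -
  define j where "j = cell n xs x"
  have c: "j < n" "xs j \<le> x" "x \<le> xs (Suc j)" using cell_in[OF g x] by (auto simp: j_def)
  have xj: "xs j \<in> {a..b}" using grid_range[OF g] c by auto
  have dx: "\<bar>x - xs j\<bar> \<le> maxstep n xs" using c step_le[OF g c(1)] by (simp add: step_def)
  have "\<bar>F (xs j) - F x\<bar> \<le> M1 * \<bar>xs j - x\<bar>" using lipF[OF xj x] .
  also have "\<dots> \<le> M1 * maxstep n xs" using dx M1pos by (simp add: mult_left_mono abs_minus_commute)
  finally have A: "\<bar>F (xs j) - F x\<bar> \<le> M1 * maxstep n xs" .
  have "\<bar>(x - xs j) * secant xs F j\<bar> \<le> maxstep n xs * M1"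
    unfolding abs_mult using dx secant_bounds(3)[OF g c(1)] by (intro mult_mono) auto
  then show ?thesis using A unfolding pl_interp_def Let_def j_def[symmetric] by (simp add: algebra_simps)
qed

lemma pchip_err:
  assumes g: "is_grid a b n xs" and x: "x \<in> {a..b}"
  shows "\<bar>pchip_interp n xs F x - F x\<bar> \<le> 24 * M2 * maxstep n xs ^ 2"
proof -
  define j where "j = cell n xs x"
  define H where "H = maxstep n xs"
  have c: "j < n" "xs j \<le> x" "x \<le> xs (Suc j)" using cell_in[OF g x] by (auto simp: j_def)
  define hj where "hj = step xs j"
  have hj: "0 < hj" "hj \<le> H" using step_pos[OF g c(1)] step_le[OF g c(1)] by (auto simp: hj_def H_def)
  define t where "t = (x - xs j) / hj"
  have t: "0 \<le> t" "t \<le> 1" using c hj by (auto simp: t_def hj_def step_def divide_le_eq)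
  have xt: "x - xs j = t * hj" using hj by (simp add: t_def)
  have xj: "xs j \<in> {a..b}" and xj1: "xs (Suc j) \<in> {a..b}" using grid_range[OF g] c by auto
  let ?g = "F' (xs j)"
  have e0: "\<bar>pchip_slope n xs F j - ?g\<bar> \<le> 11 * M2 * H"
    proof -
    have "0 \<le> M2 * H" using M2pos hj by simp
    then show ?thesis using slope_bound[OF g, of j] c by (simp add: H_def)
  qed
  have "\<bar>pchip_slope n xs F (Suc j) - F' (xs (Suc j))\<bar> \<le> 10 * M2 * H"
    using slope_bound[OF g, of "Suc j"] c by (simp add: H_def)
  then have e1: "\<bar>pchip_slope n xs F (Suc j) - ?g\<bar> \<le> 11 * M2 * H"
    using F'_step[OF g c(1)] by (simp add: H_def)
  have r1: "\<bar>F (xs (Suc j)) - F (xs j) - hj * ?g\<bar> \<le> M2 * H^2"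
  proof -
    have "\<bar>F (xs (Suc j)) - F (xs j) - hj * ?g\<bar> \<le> M2 * hj^2"
      using taylor[OF xj xj1] by (simp add: hj_def step_def)
    also have "\<dots> \<le> M2 * H^2" using hj M2pos by (intro mult_left_mono power_mono) auto
    finally show ?thesis .
  qed
  have r2: "\<bar>F x - F (xs j) - t * hj * ?g\<bar> \<le> M2 * H^2"
  proof -
    have "\<bar>F x - F (xs j) - t * hj * ?g\<bar> \<le> M2 * (x - xs j)^2"
      using taylor[OF xj x] xt by simp
    also have "\<dots> \<le> M2 * H^2" using hj M2pos c xt t
      by (intro mult_left_mono power_mono) (auto simp: hj_def step_def)
    finally show ?thesis .
  qed
  have "\<bar>F (xs j) * (2 * t^3 - 3 * t^2 + 1) + hj * pchip_slope n xs F j * (t^3 - 2 * t^2 + t)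
      + F (xs (Suc j)) * (- 2 * t^3 + 3 * t^2) + hj * pchip_slope n xs F (Suc j) * (t^3 - t^2) - F x\<bar>
      \<le> (2 * (11 * M2) + 2 * M2) * H^2"
    by (rule hermite_alg[OF t _ hj(2) _ M2pos]) (use hj M2pos e0 e1 r1 r2 in \<open>auto simp: mult.assoc\<close>)
  then show ?thesis unfolding pchip_interp_def Let_def j_def[symmetric] hj_def[symmetric] t_def[symmetric] H_def[symmetric]
    by simp
qed

lemma interp_err:
  assumes g: "is_grid a b n xs" and x: "x \<in> {a..b}" and p: "p \<in> {1, 2}"
  shows "\<bar>interp p n xs F x - F x\<bar> \<le> (2 * M1 + 24 * M2) * maxstep n xs ^ p"
proof -
  have H: "0 < maxstep n xs" using maxstep_pos[OF g] .
  show ?thesis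
  proof (cases "p = 1")
    case True
    have "0 \<le> M2 * maxstep n xs" using H M2pos by simp
    then show ?thesis using pl_err[OF g x] True by (simp add: interp_def algebra_simps)
  next
    case False
    then have "p = 2" using p by auto
    have "0 \<le> M1 * maxstep n xs ^ 2" using H M1pos by simp
    then show ?thesis using pchip_err[OF g x] \<open>p = 2\<close> by (simp add: interp_def algebra_simps)
  qed
qed

end

lemma interp_measurable:
  assumes g: "is_grid a b n xs"
  shows "interp p n xs F \<in> borel_measurable borel"
proof -
  have cm: "cell n xs \<in> borel \<rightarrow>\<^sub>M count_space UNIV" by (rule cell_measurable[OF g])
  have pl: "pl_interp n xs F \<in> borel_measurable borel"
  proof -
    have "pl_interp n xs F = (\<lambda>x. (\<lambda>j x. F (xs j) + (x - xs j) * secant xs F j) (cell n xs x) x)"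
      by (simp add: fun_eq_iff pl_interp_def Let_def)
    also have "\<dots> \<in> borel_measurable borel"
      by (rule measurable_compose_countable'[OF _ cm]) measurable
    finally show ?thesis .
  qed
  have pc: "pchip_interp n xs F \<in> borel_measurable borel"
  proof -
    have "pchip_interp n xs F = (\<lambda>x. (\<lambda>j x. F (xs j) * (2 * ((x - xs j) / step xs j)^3 - 3 * ((x - xs j) / step xs j)^2 + 1)
        + step xs j * pchip_slope n xs F j * (((x - xs j) / step xs j)^3 - 2 * ((x - xs j) / step xs j)^2 + ((x - xs j) / step xs j))
        + F (xs (Suc j)) * (- 2 * ((x - xs j) / step xs j)^3 + 3 * ((x - xs j) / step xs j)^2)
        + step xs j * pchip_slope n xs F (Suc j) * (((x - xs j) / step xs j)^3 - ((x - xs j) / step xs j)^2)) (cell n xs x) x)"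
      by (simp add: fun_eq_iff pchip_interp_def Let_def)
    also have "\<dots> \<in> borel_measurable borel"
      by (rule measurable_compose_countable'[OF _ cm]) measurable
    finally show ?thesis .
  qed
  show ?thesis using pl pc by (simp add: interp_def)
qed



lemma lint_diff_bound:
  fixes M :: "real measure" and \<eta> :: complex and u v :: "real \<Rightarrow> real"
  assumes P: "prob_space M" and S: "sets M = sets borel"
    and I: "(\<integral>\<^sup>+x. ennreal (exp (Re \<eta> * x)) \<partial>M) < \<infinity>"
    and um: "u \<in> borel_measurable borel" and vm: "v \<in> borel_measurable borel"
    and vb: "\<And>x. \<bar>v x\<bar> \<le> BV" and uv: "\<And>x. \<bar>u x - v x\<bar> \<le> S0" and c: "\<bar>cu - cv\<bar> \<le> S0"
  shows "cmod ((LINT x|M. exp (\<eta> * complex_of_real x) * complex_of_real (u x) - complex_of_real cu)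
           - (LINT x|M. exp (\<eta> * complex_of_real x) * complex_of_real (v x) - complex_of_real cv))
         \<le> S0 * enn2real (\<integral>\<^sup>+x. ennreal (exp (Re \<eta> * x)) \<partial>M) + S0"
proof -
  interpret prob_space M by (rule P)
  have mc: "\<And>N. M \<rightarrow>\<^sub>M N = borel \<rightarrow>\<^sub>M N" by (rule measurable_cong_sets[OF S refl])
  have em: "(\<lambda>x. exp (Re \<eta> * x)) \<in> borel_measurable M" unfolding mc by measurable
  have ie: "integrable M (\<lambda>x. exp (Re \<eta> * x))"
    by (rule integrableI_bounded[OF em]) (use I in simp)
  have ib: "integrable M (\<lambda>x. exp (\<eta> * complex_of_real x) * complex_of_real (w x))"
    if wm: "w \<in> borel_measurable borel" and wb: "\<And>x. \<bar>w x\<bar> \<le> B" for w B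
  proof (rule Bochner_Integration.integrable_bound[where f="\<lambda>x. B * exp (Re \<eta> * x)"])
    show "integrable M (\<lambda>x. B * exp (Re \<eta> * x))" using ie by simp
    show "(\<lambda>x. exp (\<eta> * complex_of_real x) * complex_of_real (w x)) \<in> borel_measurable M"
      unfolding mc using wm by measurable
    show "AE x in M. norm (exp (\<eta> * complex_of_real x) * complex_of_real (w x)) \<le> norm (B * exp (Re \<eta> * x))"
    proof (rule AE_I2)
      fix x
      have "norm (exp (\<eta> * complex_of_real x) * complex_of_real (w x)) = exp (Re \<eta> * x) * \<bar>w x\<bar>"
        by (simp add: norm_mult norm_exp_eq_Re)
      also have "\<dots> \<le> exp (Re \<eta> * x) * \<bar>B\<bar>" using wb[of x] by (intro mult_left_mono) auto
      also have "\<dots> = norm (B * exp (Re \<eta> * x))" by (simp add: abs_mult)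
      finally show "norm (exp (\<eta> * complex_of_real x) * complex_of_real (w x)) \<le> norm (B * exp (Re \<eta> * x))" .
    qed
  qed
  have ub: "\<bar>u x\<bar> \<le> BV + S0" for x using vb[of x] uv[of x] by linarith
  have iu: "integrable M (\<lambda>x. exp (\<eta> * complex_of_real x) * complex_of_real (u x))" by (rule ib[OF um ub])
  have iv: "integrable M (\<lambda>x. exp (\<eta> * complex_of_real x) * complex_of_real (v x))" by (rule ib[OF vm vb])
  have dm: "(\<lambda>x. u x - v x) \<in> borel_measurable borel" using um vm by measurable
  have idf: "integrable M (\<lambda>x. exp (\<eta> * complex_of_real x) * complex_of_real (u x - v x))" by (rule ib[OF dm uv])
  let ?A = "\<lambda>x. exp (\<eta> * complex_of_real x) * complex_of_real (u x)"
  let ?B = "\<lambda>x. exp (\<eta> * complex_of_real x) * complex_of_real (v x)"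
  let ?D = "\<lambda>x. exp (\<eta> * complex_of_real x) * complex_of_real (u x - v x)"
  have eq1: "(LINT x|M. ?A x - complex_of_real cu) = (LINT x|M. ?A x) - complex_of_real cu"
    using iu by (subst Bochner_Integration.integral_diff) (auto simp: prob_space)
  have eq2: "(LINT x|M. ?B x - complex_of_real cv) = (LINT x|M. ?B x) - complex_of_real cv"
    using iv by (subst Bochner_Integration.integral_diff) (auto simp: prob_space)
  have eq3: "(LINT x|M. ?A x) - (LINT x|M. ?B x) = (LINT x|M. ?D x)"
  proof -
    have "(LINT x|M. ?A x) - (LINT x|M. ?B x) = (LINT x|M. ?A x - ?B x)"
      using iu iv by (subst Bochner_Integration.integral_diff) (auto simp: prob_space)
    also have "\<dots> = (LINT x|M. ?D x)" by (simp add: algebra_simps)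
    finally show ?thesis .
  qed
  have "norm (LINT x|M. ?D x) \<le> (LINT x|M. norm (?D x))" by (rule integral_norm_bound)
  also have "\<dots> \<le> (LINT x|M. S0 * exp (Re \<eta> * x))"
  proof (rule integral_mono)
    show "integrable M (\<lambda>x. norm (?D x))" using idf by (rule integrable_norm)
    show "integrable M (\<lambda>x. S0 * exp (Re \<eta> * x))" using ie by simp
    fix x
    have "norm (?D x) = exp (Re \<eta> * x) * \<bar>u x - v x\<bar>"
      by (simp only: norm_mult norm_exp_eq_Re norm_of_real) simp
    also have "\<dots> \<le> exp (Re \<eta> * x) * S0" using uv[of x] by (intro mult_left_mono) auto
    finally show "norm (?D x) \<le> S0 * exp (Re \<eta> * x)" by (simp add: mult.commute)
  qed
  also have "\<dots> = S0 * (LINT x|M. exp (Re \<eta> * x))" by simp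
  also have "(LINT x|M. exp (Re \<eta> * x)) = enn2real (\<integral>\<^sup>+x. ennreal (exp (Re \<eta> * x)) \<partial>M)"
    by (rule integral_eq_nn_integral[OF em]) auto
  finally have nD: "norm (LINT x|M. ?D x) \<le> S0 * enn2real (\<integral>\<^sup>+x. ennreal (exp (Re \<eta> * x)) \<partial>M)" .
  have "(LINT x|M. ?A x - complex_of_real cu) - (LINT x|M. ?B x - complex_of_real cv)
      = (LINT x|M. ?D x) - complex_of_real (cu - cv)"
    unfolding eq1 eq2 eq3[symmetric] by simp
  also have "cmod \<dots> \<le> norm (LINT x|M. ?D x) + cmod (complex_of_real (cu - cv))" by (rule norm_triangle_ineq4)
  finally have X: "cmod ((LINT x|M. ?A x - complex_of_real cu) - (LINT x|M. ?B x - complex_of_real cv))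
      \<le> norm (LINT x|M. ?D x) + cmod (complex_of_real (cu - cv))" .
  have c': "cmod (complex_of_real (cu - cv)) \<le> S0" by (simp only: norm_of_real) (rule c)
  show ?thesis using X nD c' by linarith
qed



theorem mainTheorem13:
  fixes lmin lmax \<beta> s0 :: real and \<nu> :: "real \<Rightarrow> real measure" and \<eta> :: complex
    and F :: "real \<Rightarrow> real" and p :: nat
  assumes Lam: "0 \<le> lmin" "lmin < lmax"
    and beta: "\<beta> \<ge> 0"
    and kernel_prob: "\<forall>l\<in>{lmin..lmax}. prob_space (\<nu> l) \<and> sets (\<nu> l) = sets borel"
    and kernel_meas: "\<forall>A\<in>sets borel.
           (\<lambda>l. emeasure (\<nu> l) A) \<in> borel_measurable (restrict_space borel {lmin..lmax})"
    and kernel_supp: "\<forall>l\<in>{lmin..lmax}. emeasure (\<nu> l) {..0} = 0"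
    and s0: "s0 > 0"
    and expmom_fin: "\<forall>s. 0 \<le> s \<and> s < s0 \<longrightarrow> expmom {lmin..lmax} \<nu> s < \<infinity>"
    and eta: "Re \<eta> < s0"
    and F: "C2_on {lmin..lmax} F"
    and p: "p \<in> {1, 2}"
  shows "expmom {lmin..lmax} \<nu> (Re \<eta>) < \<infinity>
     \<and> (\<forall>n xs. is_grid lmin lmax n xs \<longrightarrow>
          (\<forall>l\<in>{lmin..lmax}.
             cmod (Nexp lmin lmax \<beta> \<eta> \<nu> (interp p n xs F) l - Nexp lmin lmax \<beta> \<eta> \<nu> F l)
               \<le> lmax * (Cstar {lmin..lmax} \<nu> (Re \<eta>) + 1)
                   * supnorm_on {lmin..lmax} (\<lambda>x. interp p n xs F x - F x)))
     \<and> (\<exists>K. \<forall>n xs. is_grid lmin lmax n xs \<longrightarrow>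
          supnorm_on {lmin..lmax} (\<lambda>x. interp p n xs F x - F x) \<le> K * maxstep n xs ^ p
          \<and> (\<forall>l\<in>{lmin..lmax}.
               cmod (Nexp lmin lmax \<beta> \<eta> \<nu> (interp p n xs F) l - Nexp lmin lmax \<beta> \<eta> \<nu> F l)
                 \<le> K * maxstep n xs ^ p))"
proof -
  let ?L = "{lmin..lmax}"
  obtain F' F'' where dFs: "\<forall>x\<in>?L. (F has_real_derivative F' x) (at x within ?L)
       \<and> (F' has_real_derivative F'' x) (at x within ?L)" and cF'': "continuous_on ?L F''"
    using F unfolding C2_on_def by blast
  have dF: "\<And>x. x \<in> ?L \<Longrightarrow> (F has_real_derivative F' x) (at x within ?L)" using dFs by blast
  have dF': "\<And>x. x \<in> ?L \<Longrightarrow> (F' has_real_derivative F'' x) (at x within ?L)" using dFs by blast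
  have cF: "continuous_on ?L F" by (rule DERIV_continuous_on[OF dF])
  have cF': "continuous_on ?L F'" by (rule DERIV_continuous_on[OF dF'])
  have bnd: "\<exists>B\<ge>0. \<forall>x\<in>?L. \<bar>f x\<bar> \<le> B" if "continuous_on ?L f" for f :: "real \<Rightarrow> real"
  proof -
    have "bounded (f ` ?L)" using compact_continuous_image[OF that compact_Icc] by (rule compact_imp_bounded)
    then obtain B where "\<forall>y\<in>f ` ?L. norm y \<le> B" unfolding bounded_iff by blast
    then show ?thesis by (intro exI[of _ "max 0 B"]) auto
  qed
  obtain M1 where M1: "M1 \<ge> 0" "\<forall>x\<in>?L. \<bar>F' x\<bar> \<le> M1" using bnd[OF cF'] by blast
  obtain M2 where M2: "M2 \<ge> 0" "\<forall>x\<in>?L. \<bar>F'' x\<bar> \<le> M2" using bnd[OF cF''] by blast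
  obtain BF where BF: "BF \<ge> 0" "\<forall>x\<in>?L. \<bar>F x\<bar> \<le> BF" using bnd[OF cF] by blast
  interpret interp_setting lmin lmax F F' F'' M1 M2
    by unfold_locales (use Lam dF dF' M1 M2 in auto)
  define K0 where "K0 = 2 * M1 + 24 * M2"
  have K0: "0 \<le> K0" using M1pos M2pos by (simp add: K0_def)
  define D where "D n xs x = interp p n xs F x - F x" for n xs x
  have Derr: "\<bar>D n xs x\<bar> \<le> K0 * maxstep n xs ^ p" if g: "is_grid lmin lmax n xs" and x: "x \<in> ?L" for n xs x
    unfolding D_def K0_def by (rule interp_err[OF g x p])
  have bdd: "bdd_above ((\<lambda>x. \<bar>D n xs x\<bar>) ` ?L)" if g: "is_grid lmin lmax n xs" for n xs
    using Derr[OF g] by (intro bdd_aboveI2) 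
  have SNle: "supnorm_on ?L (D n xs) \<le> K0 * maxstep n xs ^ p" if g: "is_grid lmin lmax n xs" for n xs
    unfolding supnorm_on_def using Derr[OF g] Lam by (intro cSUP_least) auto
  have SNge: "\<bar>D n xs x\<bar> \<le> supnorm_on ?L (D n xs)" if g: "is_grid lmin lmax n xs" and x: "x \<in> ?L" for n xs x
    unfolding supnorm_on_def using bdd[OF g] x by (rule cSUP_upper2) simp
  have SN0: "0 \<le> supnorm_on ?L (D n xs)" if g: "is_grid lmin lmax n xs" for n xs
    using SNge[OF g, of lmin] Lam by force
  define s where "s = max 0 (Re \<eta>)"
  have Emax: "expmom ?L \<nu> s < \<infinity>" using expmom_fin s0 eta by (auto simp: s_def)
  have Il: "(\<integral>\<^sup>+x. ennreal (exp (Re \<eta> * x)) \<partial>\<nu> l) \<le> expmom ?L \<nu> s" if l: "l \<in> ?L" for l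
  proof -
    have sets: "sets (\<nu> l) = sets borel" using kernel_prob l by blast
    have "{..0::real} \<in> null_sets (\<nu> l)" using kernel_supp l sets by (intro null_setsI) auto
    then have ae: "AE x in \<nu> l. 0 < x" by (rule AE_I') auto
    have "(\<integral>\<^sup>+x. ennreal (exp (Re \<eta> * x)) \<partial>\<nu> l) \<le> (\<integral>\<^sup>+x. ennreal (exp (s * x)) \<partial>\<nu> l)"
    proof (rule nn_integral_mono_AE)
      show "AE x in \<nu> l. ennreal (exp (Re \<eta> * x)) \<le> ennreal (exp (s * x))"
        using ae by eventually_elim (auto simp: s_def intro!: ennreal_leI mult_right_mono)
    qed
    also have "\<dots> \<le> expmom ?L \<nu> s" unfolding expmom_def using l by (rule SUP_upper)
    finally show ?thesis .
  qed
  have E: "expmom ?L \<nu> (Re \<eta>) < \<infinity>"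
  proof -
    have "expmom ?L \<nu> (Re \<eta>) \<le> expmom ?L \<nu> s" unfolding expmom_def[of _ _ "Re \<eta>"]
      using Il by (intro SUP_least) auto
    then show ?thesis using Emax by (simp add: order_le_less_trans)
  qed
  have Il2: "(\<integral>\<^sup>+x. ennreal (exp (Re \<eta> * x)) \<partial>\<nu> l) \<le> expmom ?L \<nu> (Re \<eta>)" if l: "l \<in> ?L" for l
    unfolding expmom_def using l by (rule SUP_upper)
  have Cge: "enn2real (\<integral>\<^sup>+x. ennreal (exp (Re \<eta> * x)) \<partial>\<nu> l) \<le> Cstar ?L \<nu> (Re \<eta>)" if l: "l \<in> ?L" for l
    unfolding Cstar_def using Il2[OF l] E by (intro enn2real_mono) auto
  have C0: "0 \<le> Cstar ?L \<nu> (Re \<eta>)" unfolding Cstar_def by simp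
  have clm: "(\<lambda>x. max lmin (min lmax (l + \<beta> * x))) \<in> borel_measurable borel" for l by measurable
  have clin: "max lmin (min lmax y) \<in> ?L" for y using Lam by auto
  have cFc: "continuous_on UNIV (\<lambda>y. F (max lmin (min lmax y)))"
    by (rule continuous_on_compose2[OF cF]) (use Lam in \<open>auto intro!: continuous_intros simp: clin\<close>)
  have Fm: "(\<lambda>y. F (max lmin (min lmax y))) \<in> borel_measurable borel"
    by (rule borel_measurable_continuous_onI[OF cFc])
  have main: "cmod (Nexp lmin lmax \<beta> \<eta> \<nu> (interp p n xs F) l - Nexp lmin lmax \<beta> \<eta> \<nu> F l)
               \<le> lmax * (Cstar ?L \<nu> (Re \<eta>) + 1) * supnorm_on ?L (D n xs)"
    if g: "is_grid lmin lmax n xs" and l: "l \<in> ?L" for n xs l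
  proof -
    let ?SN = "supnorm_on ?L (D n xs)"
    let ?I = "enn2real (\<integral>\<^sup>+x. ennreal (exp (Re \<eta> * x)) \<partial>\<nu> l)"
    have P: "prob_space (\<nu> l)" and S: "sets (\<nu> l) = sets borel" using kernel_prob l by auto
    have If: "(\<integral>\<^sup>+x. ennreal (exp (Re \<eta> * x)) \<partial>\<nu> l) < \<infinity>" using Il2[OF l] E by (simp add: order_le_less_trans)
    have um: "(\<lambda>x. clamp_ext lmin lmax (interp p n xs F) (l + \<beta> * x)) \<in> borel_measurable borel"
      unfolding clamp_ext_def using measurable_compose[OF clm interp_measurable[OF g]] by simp
    have vm: "(\<lambda>x. clamp_ext lmin lmax F (l + \<beta> * x)) \<in> borel_measurable borel"
      unfolding clamp_ext_def using measurable_compose[OF _ Fm, of "\<lambda>x. l + \<beta> * x"] by measurable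
    have vb: "\<bar>clamp_ext lmin lmax F (l + \<beta> * x)\<bar> \<le> BF" for x
      unfolding clamp_ext_def using BF clin by blast
    have uv: "\<bar>clamp_ext lmin lmax (interp p n xs F) (l + \<beta> * x) - clamp_ext lmin lmax F (l + \<beta> * x)\<bar> \<le> ?SN" for x
      using SNge[OF g clin] unfolding clamp_ext_def D_def by simp
    have c: "\<bar>clamp_ext lmin lmax (interp p n xs F) l - clamp_ext lmin lmax F l\<bar> \<le> ?SN"
      using SNge[OF g clin] unfolding clamp_ext_def D_def by simp
    have B: "cmod ((LINT x|\<nu> l. exp (\<eta> * complex_of_real x) * complex_of_real (clamp_ext lmin lmax (interp p n xs F) (l + \<beta> * x)) - complex_of_real (clamp_ext lmin lmax (interp p n xs F) l))
           - (LINT x|\<nu> l. exp (\<eta> * complex_of_real x) * complex_of_real (clamp_ext lmin lmax F (l + \<beta> * x)) - complex_of_real (clamp_ext lmin lmax F l)))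
         \<le> ?SN * ?I + ?SN"
      by (rule lint_diff_bound[OF P S If um vm vb uv c])
    have l0: "0 \<le> l" "l \<le> lmax" using l Lam by auto
    have "cmod (Nexp lmin lmax \<beta> \<eta> \<nu> (interp p n xs F) l - Nexp lmin lmax \<beta> \<eta> \<nu> F l)
        = l * cmod ((LINT x|\<nu> l. exp (\<eta> * complex_of_real x) * complex_of_real (clamp_ext lmin lmax (interp p n xs F) (l + \<beta> * x)) - complex_of_real (clamp_ext lmin lmax (interp p n xs F) l))
           - (LINT x|\<nu> l. exp (\<eta> * complex_of_real x) * complex_of_real (clamp_ext lmin lmax F (l + \<beta> * x)) - complex_of_real (clamp_ext lmin lmax F l)))"
      unfolding Nexp_def right_diff_distrib[symmetric] norm_mult using l0 by simp
    also have "\<dots> \<le> l * (?SN * ?I + ?SN)" using B l0 by (intro mult_left_mono) auto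
    also have "\<dots> \<le> lmax * (?SN * ?I + ?SN)" using l0 SN0[OF g] by (intro mult_right_mono) auto
    also have "?SN * ?I + ?SN \<le> (Cstar ?L \<nu> (Re \<eta>) + 1) * ?SN"
    proof -
      have "?SN * ?I \<le> ?SN * Cstar ?L \<nu> (Re \<eta>)" using Cge[OF l] SN0[OF g] by (rule mult_left_mono)
      then show ?thesis by (simp add: algebra_simps)
    qed
    then have "lmax * (?SN * ?I + ?SN) \<le> lmax * ((Cstar ?L \<nu> (Re \<eta>) + 1) * ?SN)"
      using Lam by (intro mult_left_mono) auto
    finally show ?thesis by (simp add: mult.assoc)
  qed
  define K where "K = K0 * (1 + lmax * (Cstar ?L \<nu> (Re \<eta>) + 1))"
  have A0: "0 \<le> lmax * (Cstar ?L \<nu> (Re \<eta>) + 1)" using Lam C0 by simp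
  have part3: "supnorm_on ?L (D n xs) \<le> K * maxstep n xs ^ p
      \<and> (\<forall>l\<in>?L. cmod (Nexp lmin lmax \<beta> \<eta> \<nu> (interp p n xs F) l - Nexp lmin lmax \<beta> \<eta> \<nu> F l)
                 \<le> K * maxstep n xs ^ p)" if g: "is_grid lmin lmax n xs" for n xs
  proof -
    have hp: "0 \<le> K0 * maxstep n xs ^ p" using K0 maxstep_pos[OF g] by simp
    have K: "K * maxstep n xs ^ p = K0 * maxstep n xs ^ p + lmax * (Cstar ?L \<nu> (Re \<eta>) + 1) * (K0 * maxstep n xs ^ p)"
      by (simp add: K_def algebra_simps)
    have a: "lmax * (Cstar ?L \<nu> (Re \<eta>) + 1) * supnorm_on ?L (D n xs) \<le> lmax * (Cstar ?L \<nu> (Re \<eta>) + 1) * (K0 * maxstep n xs ^ p)"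
      using SNle[OF g] A0 by (intro mult_left_mono)
    show ?thesis
    proof
      show "supnorm_on ?L (D n xs) \<le> K * maxstep n xs ^ p" using SNle[OF g] A0 hp K
        by (smt (verit) mult_nonneg_nonneg)
      show "\<forall>l\<in>?L. cmod (Nexp lmin lmax \<beta> \<eta> \<nu> (interp p n xs F) l - Nexp lmin lmax \<beta> \<eta> \<nu> F l)
                 \<le> K * maxstep n xs ^ p"
        using main[OF g] a K hp by (smt (verit))
    qed
  qed
  show ?thesis
    using E main part3 unfolding D_def by blast
qed

end
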